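(* Let $\mathcal{G}$ be a finite collection of nonempty subsets of $\{1,\dots,d\}$, let $n=\sum_{g\in\mathcal{G}}|g|$, and let $\mathbb{R}^n$ be partitioned into pairwise disjoint index blocks $j(g)$, $|j(g)|=|g|$, $g\in\mathcal{G}$, with $\mathbf{x}_{j(g)}$ identified with a vector supported on the coordinates in $g$. Let $M\in\{0,1\}^{d\times n}$ satisfy $(M\mathbf{x})_i=\sum_{g\in\mathcal{G}:\,i\in g}(\text{entry of }\mathbf{x}_{j(g)}\text{ corresponding to }i)$. Let $\lambda>0$, $w_g>0$, $\mathbf{b}\in\mathbb{R}^d$, $\rho>0$, and $$L_\rho(\mathbf{x}^1,\mathbf{x}^2;\mathbf{y})=\lambda\sum_{g\in\mathcal{G}}w_g\|\mathbf{x}^1_{j(g)}\|_2+\tfrac12\|M\mathbf{x}^2-\mathbf{b}\|_2^2+\langle\mathbf{y},\mathbf{x}^1-\mathbf{x}^2\rangle+\tfrac{\rho}{2}\|\mathbf{x}^1-\mathbf{x}^2\|_2^2 .$$ Assume $L_\rho$ has a finite saddle point. Let $\alpha$ satisfy $0<\alpha<\rho$, and consider the sequences generated from initial points $\mathbf{x}^{1,0},\mathbf{x}^{2,0},\mathbf{y}^0\in\mathbb{R}^n$ by $$\mathbf{x}^{1,k+1}_{j(g)}=\arg\min_{\mathbf{z}\in\mathbb{R}^{|g|}}\lambda w_g\|\mathbf{z}\|_2+\tfrac{\rho}{2}\big\|\mathbf{z}-\mathbf{x}^{2,k}_{j(g)}+\tfrac1\rho\mathbf{y}^k_{j(g)}\big\|_2^2\quad(g\in\mathcal{G}),$$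 $$\mathbf{x}^{2,k+1}=\arg\min_{\mathbf{x}^2\in\mathbb{R}^n}\tfrac12\|M\mathbf{x}^2-\mathbf{b}\|_2^2+\tfrac{\rho}{2}\big\|\mathbf{x}^2-\mathbf{x}^{1,k+1}-\tfrac1\rho\mathbf{y}^k\big\|_2^2,$$ $$\mathbf{y}^{k+1}=\mathbf{y}^k+\alpha(\mathbf{x}^{1,k+1}-\mathbf{x}^{2,k+1}).$$ Then the sequences $\{\mathbf{x}^{1,k}\}$, $\{\mathbf{x}^{2,k}\}$ and $\{\mathbf{y}^k\}$ are uniformly bounded.
   Context: A saddle point of $L_\rho$ is $(\mathbf{x}^{1,*},\mathbf{x}^{2,*};\mathbf{y}^* )$ with $L_\rho(\mathbf{x}^{1,*},\mathbf{x}^{2,*};\mathbf{y})\le L_\rho(\mathbf{x}^{1,*},\mathbf{x}^{2,*};\mathbf{y}^* )\le L_\rho(\mathbf{x}^1,\mathbf{x}^2;\mathbf{y}^* )$ for all $\mathbf{x}^1,\mathbf{x}^2,\mathbf{y}$. The iteration is ADMM with dual stepsize $\alpha$ applied to $\min\lambda\sum_g w_g\|\mathbf{x}^1_{j(g)}\|_2+\frac12\|M\mathbf{x}^2-\mathbf{b}\|_2^2$ s.t. $\mathbf{x}^1=\mathbf{x}^2$ (the proximal operator of the latent overlapping group lasso penalty at $\mathbf{b}$). *)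

theory Defs
  imports "HOL-Analysis.Analysis"
begin

text \<open>Vectors in R^n, n = sum of |g| over the groups, are represented as functions on the
  index set of pairs (g,i) with g a group and i in g: the block j(g) consists of the
  coordinates (g,i), i in g, and the entry of x_{j(g)} corresponding to i is x (g,i).
  Values of such functions outside this index set are irrelevant.\<close>

definition idx :: "nat set set \<Rightarrow> (nat set \<times> nat) set" where
  "idx G = Sigma G (\<lambda>g. g)"

type_synonym lvec = "nat set \<times> nat \<Rightarrow> real"

definition blocknorm :: "lvec \<Rightarrow> nat set \<Rightarrow> real" where
  "blocknorm x g = sqrt (\<Sum>i\<in>g. (x (g,i))\<^sup>2)"

definition Mop :: "nat set set \<Rightarrow> lvec \<Rightarrow> nat \<Rightarrow> real" where
  "Mop G x i = (\<Sum>g\<in>{g\<in>G. i \<in> g}. x (g,i))"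

definition resid_sq :: "nat \<Rightarrow> nat set set \<Rightarrow> (nat \<Rightarrow> real) \<Rightarrow> lvec \<Rightarrow> real" where
  "resid_sq d G b x = (\<Sum>i\<in>{1..d}. (Mop G x i - b i)\<^sup>2)"

definition linner :: "nat set set \<Rightarrow> lvec \<Rightarrow> lvec \<Rightarrow> real" where
  "linner G x y = (\<Sum>p\<in>idx G. x p * y p)"

definition lsqnorm :: "nat set set \<Rightarrow> lvec \<Rightarrow> real" where
  "lsqnorm G x = (\<Sum>p\<in>idx G. (x p)\<^sup>2)"

definition Lrho :: "nat \<Rightarrow> nat set set \<Rightarrow> real \<Rightarrow> (nat set \<Rightarrow> real) \<Rightarrow> (nat \<Rightarrow> real) \<Rightarrow> real
                     \<Rightarrow> lvec \<Rightarrow> lvec \<Rightarrow> lvec \<Rightarrow> real" where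
  "Lrho d G lam w b rho x1 x2 y =
     lam * (\<Sum>g\<in>G. w g * blocknorm x1 g) + 1/2 * resid_sq d G b x2
     + linner G y (\<lambda>p. x1 p - x2 p) + rho/2 * lsqnorm G (\<lambda>p. x1 p - x2 p)"

definition saddle_point where
  "saddle_point d G lam w b rho x1s x2s ys \<longleftrightarrow>
     (\<forall>x1 x2 y. Lrho d G lam w b rho x1s x2s y \<le> Lrho d G lam w b rho x1s x2s ys
              \<and> Lrho d G lam w b rho x1s x2s ys \<le> Lrho d G lam w b rho x1 x2 ys)"

end

theory Submission
  imports Defs
begin


lemma small_t:
  fixes A B :: real
  assumes h: "\<forall>t. 0 < t \<and> t \<le> 1 \<longrightarrow> 0 \<le> t*A + t^2*B"
  shows "0 \<le> A"
proof (rule ccontr)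
  assume "\<not> 0 \<le> A"
  hence A: "A < 0" by simp
  define t where "t = min 1 (-A / (2*(\<bar>B\<bar>+1)))"
  have pos: "0 < -A / (2*(\<bar>B\<bar>+1))" using A by (intro divide_pos_pos) auto
  have t0: "0 < t" using pos by (simp add: t_def)
  have t1: "t \<le> 1" by (simp add: t_def)
  have tle: "t \<le> -A / (2*(\<bar>B\<bar>+1))" by (simp add: t_def)
  have "t * (\<bar>B\<bar>+1) \<le> -A/2"
    using tle by (simp add: field_simps add_pos_nonneg) 
  hence "t * \<bar>B\<bar> \<le> -A/2" using t0 by (smt (verit) distrib_left mult.commute mult_cancel_left1)
  hence "t * B \<le> -A/2" by (smt (verit) abs_ge_self mult_left_mono t0)
  hence "A + t*B < 0" using A by linarith
  hence "t * (A + t*B) < 0" using t0 by (simp add: mult_pos_neg)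
  moreover have "t*(A+t*B) = t*A + t^2*B" by (simp add: algebra_simps power2_eq_square)
  ultimately show False using h t0 t1 by auto
qed

lemma vi_lemma:
  fixes F :: "('a \<Rightarrow> real) \<Rightarrow> real" and x a v :: "'a \<Rightarrow> real" and S :: "'a set" and rho :: real
  assumes conv: "\<forall>t. 0 \<le> t \<and> t \<le> 1 \<longrightarrow> F (\<lambda>p. x p + t*(v p - x p)) \<le> (1-t)*F x + t*F v"
  and minim: "\<forall>z. F x + rho/2 * (\<Sum>p\<in>S. (x p - a p)^2) \<le> F z + rho/2*(\<Sum>p\<in>S. (z p - a p)^2)"
  shows "0 \<le> F v - F x + rho * (\<Sum>p\<in>S. (x p - a p)*(v p - x p))"
proof -
  define L where "L = (\<Sum>p\<in>S. (x p - a p)*(v p - x p))"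
  define Q where "Q = (\<Sum>p\<in>S. (x p - a p)^2)"
  define R where "R = (\<Sum>p\<in>S. (v p - x p)^2)"
  have "\<forall>t. 0 < t \<and> t \<le> 1 \<longrightarrow> 0 \<le> t*(F v - F x + rho * L) + t^2*(rho/2*R)"
  proof (intro allI impI)
    fix t :: real assume t: "0 < t \<and> t \<le> 1"
    define z where "z = (\<lambda>p. x p + t*(v p - x p))"
    have pw: "\<And>p. (z p - a p)^2 = (x p - a p)^2 + (2*t)*((x p - a p)*(v p - x p)) + t^2*(v p - x p)^2"
      by (simp add: z_def power2_eq_square algebra_simps)
    have eq: "(\<Sum>p\<in>S. (z p - a p)^2) = Q + (2*t)*L + t^2*R"
      unfolding pw Q_def L_def R_def by (simp add: sum.distrib sum_distrib_left)
    have c: "F z \<le> (1-t)*F x + t*F v" using conv t unfolding z_def by auto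
    have m: "F x + rho/2*Q \<le> F z + rho/2*(Q + (2*t)*L + t^2*R)" using minim eq Q_def by metis
    show "0 \<le> t*(F v - F x + rho * L) + t^2*(rho/2*R)"
      using c m by (simp add: algebra_simps)
  qed
  hence "0 \<le> F v - F x + rho * L" by (rule small_t)
  thus ?thesis by (simp add: L_def)
qed

lemma l2_conv:
  assumes "0 \<le> t" "t \<le> 1"
  shows "L2_set (\<lambda>i. x i + t*(v i - x i)) A \<le> (1-t)*L2_set x A + t * L2_set v A"
proof -
  have "L2_set (\<lambda>i. x i + t*(v i - x i)) A = L2_set (\<lambda>i. (1-t)*x i + t * v i) A"
    by (simp add: algebra_simps)
  also have "\<dots> \<le> L2_set (\<lambda>i. (1-t)*x i) A + L2_set (\<lambda>i. t * v i) A"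
    by (rule L2_set_triangle_ineq)
  also have "\<dots> = (1-t)*L2_set x A + t * L2_set v A"
    using assms by (simp add: L2_set_right_distrib)
  finally show ?thesis .
qed

lemma sq_conv:
  fixes a c t :: real
  assumes "0 \<le> t" "t \<le> 1"
  shows "(a + t*(c - a))^2 \<le> (1-t)*a^2 + t*c^2"
proof -
  have "(1-t)*a^2 + t*c^2 - (a + t*(c - a))^2 = t*(1-t)*(a-c)^2"
    by (simp add: power2_eq_square algebra_simps)
  moreover have "0 \<le> t*(1-t)*(a-c)^2" using assms by simp
  ultimately show ?thesis by linarith
qed

lemma resid_conv:
  assumes "0 \<le> t" "t \<le> 1" and fin: "finite G"
  shows "resid_sq d G b (\<lambda>p. x p + t*(v p - x p)) \<le> (1-t)*resid_sq d G b x + t*resid_sq d G b v"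
proof -
  have M: "\<And>i. Mop G (\<lambda>p. x p + t*(v p - x p)) i - b i = (Mop G x i - b i) + t*((Mop G v i - b i) - (Mop G x i - b i))"
    by (simp add: Mop_def sum.distrib sum_distrib_left sum_subtractf algebra_simps)
  have "resid_sq d G b (\<lambda>p. x p + t*(v p - x p)) \<le> (\<Sum>i\<in>{1..d}. (1-t)*(Mop G x i - b i)^2 + t*(Mop G v i - b i)^2)"
    unfolding resid_sq_def M by (rule sum_mono) (rule sq_conv[OF assms(1,2)])
  also have "\<dots> = (1-t)*resid_sq d G b x + t*resid_sq d G b v"
    by (simp add: resid_sq_def sum.distrib sum_distrib_left)
  finally show ?thesis .
qed



theorem lemma3p2:
  fixes d :: nat and G :: "nat set set" and lam rho \<alpha> :: real
    and w :: "nat set \<Rightarrow> real" and b :: "nat \<Rightarrow> real"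
    and x1 x2 y :: "nat \<Rightarrow> lvec"
  assumes G_fin: "finite G"
    and G_sub: "\<forall>g\<in>G. g \<noteq> {} \<and> g \<subseteq> {1..d}"
    and lam_pos: "lam > 0" and w_pos: "\<forall>g\<in>G. w g > 0" and rho_pos: "rho > 0"
    and saddle: "\<exists>x1s x2s ys. saddle_point d G lam w b rho x1s x2s ys"
    and alpha: "0 < \<alpha>" "\<alpha> < rho"
    and x1_upd: "\<forall>k. \<forall>g\<in>G. \<forall>z :: nat \<Rightarrow> real.
        lam * w g * sqrt (\<Sum>i\<in>g. (x1 (Suc k) (g,i))\<^sup>2)
          + rho/2 * (\<Sum>i\<in>g. (x1 (Suc k) (g,i) - x2 k (g,i) + y k (g,i) / rho)\<^sup>2)
        \<le> lam * w g * sqrt (\<Sum>i\<in>g. (z i)\<^sup>2)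
          + rho/2 * (\<Sum>i\<in>g. (z i - x2 k (g,i) + y k (g,i) / rho)\<^sup>2)"
    and x2_upd: "\<forall>k. \<forall>z :: lvec.
        1/2 * resid_sq d G b (x2 (Suc k))
          + rho/2 * lsqnorm G (\<lambda>p. x2 (Suc k) p - x1 (Suc k) p - y k p / rho)
        \<le> 1/2 * resid_sq d G b z
          + rho/2 * lsqnorm G (\<lambda>p. z p - x1 (Suc k) p - y k p / rho)"
    and y_upd: "\<forall>k. \<forall>p. y (Suc k) p = y k p + \<alpha> * (x1 (Suc k) p - x2 (Suc k) p)"
  shows "\<exists>C. \<forall>k. \<forall>p\<in>idx G. \<bar>x1 k p\<bar> \<le> C \<and> \<bar>x2 k p\<bar> \<le> C \<and> \<bar>y k p\<bar> \<le> C"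
proof -
  define P where "P = idx G"
  have finP: "finite P" unfolding P_def idx_def
    using G_fin G_sub by (auto intro!: finite_SigmaI dest: finite_subset)
  have fin_g: "\<And>g. g \<in> G \<Longrightarrow> finite g" using G_sub by (auto dest: finite_subset)
  have inP: "\<And>g i. g \<in> G \<Longrightarrow> i \<in> g \<Longrightarrow> (g,i) \<in> P" by (simp add: P_def idx_def)
  obtain x1s x2s ys where sp: "saddle_point d G lam w b rho x1s x2s ys" using saddle by blast
  have sp1: "\<And>yv. Lrho d G lam w b rho x1s x2s yv \<le> Lrho d G lam w b rho x1s x2s ys"
    and sp2: "\<And>u v. Lrho d G lam w b rho x1s x2s ys \<le> Lrho d G lam w b rho u v ys"
    using sp unfolding saddle_point_def by auto
  define f where "f = (\<lambda>z. lam * (\<Sum>g\<in>G. w g * blocknorm z g))"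
  define h where "h = (\<lambda>z. 1/2 * resid_sq d G b z)"
  define lin where "lin = (\<lambda>z. \<Sum>p\<in>P. ys p * z p)"
  have Lr: "\<And>u v yv. Lrho d G lam w b rho u v yv = f u + h v + (\<Sum>p\<in>P. yv p * (u p - v p))
      + rho/2 * (\<Sum>p\<in>P. (u p - v p)^2)"
    by (simp add: Lrho_def f_def h_def linner_def lsqnorm_def P_def)
  have eqs: "\<forall>p\<in>P. x1s p = x2s p"
  proof -
    have "(\<Sum>p\<in>P. (ys p + (x1s p - x2s p)) * (x1s p - x2s p)) \<le> (\<Sum>p\<in>P. ys p * (x1s p - x2s p))"
      using sp1[of "\<lambda>p. ys p + (x1s p - x2s p)"] unfolding Lr by simp
    hence "(\<Sum>p\<in>P. (x1s p - x2s p)^2) \<le> 0"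
      by (simp add: distrib_right sum.distrib power2_eq_square)
    hence "\<forall>p\<in>P. (x1s p - x2s p)^2 = 0"
      using sum_nonneg_eq_0_iff[OF finP, of "\<lambda>p. (x1s p - x2s p)^2"]
      by (meson antisym sum_nonneg zero_le_power2)
    thus ?thesis by simp
  qed
  have f_conv: "\<And>x v t. 0 \<le> t \<Longrightarrow> t \<le> 1 \<Longrightarrow> f (\<lambda>p. x p + t*(v p - x p)) \<le> (1-t)*f x + t * f v"
  proof -
    fix x v :: lvec and t :: real assume t: "0 \<le> t" "t \<le> 1"
    have "(\<Sum>g\<in>G. w g * blocknorm (\<lambda>p. x p + t*(v p - x p)) g)
        \<le> (\<Sum>g\<in>G. w g * ((1-t)*blocknorm x g + t * blocknorm v g))"
    proof (rule sum_mono)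
      fix g assume g: "g \<in> G"
      have "blocknorm (\<lambda>p. x p + t*(v p - x p)) g \<le> (1-t)*blocknorm x g + t * blocknorm v g"
        using l2_conv[OF t, of "\<lambda>i. x (g,i)" "\<lambda>i. v (g,i)" g] by (simp add: blocknorm_def L2_set_def)
      thus "w g * blocknorm (\<lambda>p. x p + t*(v p - x p)) g \<le> w g * ((1-t)*blocknorm x g + t * blocknorm v g)"
        using w_pos g by (simp add: mult_left_mono)
    qed
    also have "\<dots> = (1-t)*(\<Sum>g\<in>G. w g * blocknorm x g) + t*(\<Sum>g\<in>G. w g * blocknorm v g)"
    proof -
      have "\<And>g. w g * ((1-t)*blocknorm x g + t * blocknorm v g) = (1-t)*(w g * blocknorm x g) + t*(w g * blocknorm v g)"
        by (simp add: algebra_simps)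
      thus ?thesis by (simp add: sum.distrib sum_distrib_left)
    qed
    finally show "f (\<lambda>p. x p + t*(v p - x p)) \<le> (1-t)*f x + t * f v"
      unfolding f_def using lam_pos
      by (metis (no_types, lifting) mult.left_commute mult_left_mono distrib_left less_eq_real_def)
  qed
  have h_conv: "\<And>x v t. 0 \<le> t \<Longrightarrow> t \<le> 1 \<Longrightarrow> h (\<lambda>p. x p + t*(v p - x p)) \<le> (1-t)*h x + t * h v"
  proof -
    fix x v :: lvec and t :: real assume t: "0 \<le> t" "t \<le> 1"
    show "h (\<lambda>p. x p + t*(v p - x p)) \<le> (1-t)*h x + t * h v"
    proof -
      have "1/2 * resid_sq d G b (\<lambda>p. x p + t*(v p - x p)) \<le> 1/2 * ((1-t)*resid_sq d G b x + t*resid_sq d G b v)"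
        using resid_conv[OF t G_fin, of d b x v] by simp
      also have "\<dots> = (1-t)*(1/2 * resid_sq d G b x) + t*(1/2*resid_sq d G b v)" by (simp add: field_simps)
      finally show ?thesis unfolding h_def .
    qed
  qed
  have lin_lin: "\<And>x v t. lin (\<lambda>p. x p + t*(v p - x p)) = (1-t)*lin x + t * lin v"
    by (simp add: lin_def sum.distrib sum_distrib_left sum_subtractf algebra_simps)
  have f_eq: "f x1s = f x2s"
  proof -
    have "\<And>g. g \<in> G \<Longrightarrow> blocknorm x1s g = blocknorm x2s g"
      unfolding blocknorm_def using eqs inP by (metis (no_types, lifting) sum.cong)
    thus ?thesis unfolding f_def by simp
  qed
  have lin_eq: "lin x1s = lin x2s" unfolding lin_def using eqs by simp
  have Astar: "\<And>v. 0 \<le> (f v + lin v) - (f x2s + lin x2s)"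
  proof -
    fix v
    have "0 \<le> (f v + lin v) - (f x1s + lin x1s) + rho * (\<Sum>p\<in>P. (x1s p - x2s p)*(v p - x1s p))"
    proof (rule vi_lemma[where F="\<lambda>z. f z + lin z"])
      show "\<forall>t. 0 \<le> t \<and> t \<le> 1 \<longrightarrow> f (\<lambda>p. x1s p + t * (v p - x1s p)) + lin (\<lambda>p. x1s p + t * (v p - x1s p))
          \<le> (1 - t) * (f x1s + lin x1s) + t * (f v + lin v)"
      proof (intro allI impI)
        fix t :: real assume t: "0 \<le> t \<and> t \<le> 1"
        show "f (\<lambda>p. x1s p + t * (v p - x1s p)) + lin (\<lambda>p. x1s p + t * (v p - x1s p))
          \<le> (1 - t) * (f x1s + lin x1s) + t * (f v + lin v)"
          using f_conv[of t x1s v, OF conjunct1[OF t] conjunct2[OF t]] lin_lin[of x1s t v] by (simp add: distrib_left)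
      qed
      show "\<forall>z. f x1s + lin x1s + rho / 2 * (\<Sum>p\<in>P. (x1s p - x2s p)\<^sup>2) \<le> f z + lin z + rho / 2 * (\<Sum>p\<in>P. (z p - x2s p)\<^sup>2)"
      proof
        fix z
        have *: "\<And>u. (\<Sum>p\<in>P. ys p * (u p - x2s p)) = lin u - lin x2s"
          by (simp add: lin_def right_diff_distrib sum_subtractf)
        show "f x1s + lin x1s + rho / 2 * (\<Sum>p\<in>P. (x1s p - x2s p)\<^sup>2) \<le> f z + lin z + rho / 2 * (\<Sum>p\<in>P. (z p - x2s p)\<^sup>2)"
          using sp2[of z x2s] unfolding Lr * by simp
      qed
    qed
    moreover have "(\<Sum>p\<in>P. (x1s p - x2s p)*(v p - x1s p)) = 0" using eqs by simp
    ultimately show "0 \<le> (f v + lin v) - (f x2s + lin x2s)" using f_eq lin_eq by simp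
  qed
  have Bstar: "\<And>v. 0 \<le> (h v - lin v) - (h x2s - lin x2s)"
  proof -
    fix v
    have "0 \<le> (h v - lin v) - (h x2s - lin x2s) + rho * (\<Sum>p\<in>P. (x2s p - x1s p)*(v p - x2s p))"
    proof (rule vi_lemma[where F="\<lambda>z. h z - lin z"])
      show "\<forall>t. 0 \<le> t \<and> t \<le> 1 \<longrightarrow> h (\<lambda>p. x2s p + t * (v p - x2s p)) - lin (\<lambda>p. x2s p + t * (v p - x2s p))
          \<le> (1 - t) * (h x2s - lin x2s) + t * (h v - lin v)"
      proof (intro allI impI)
        fix t :: real assume t: "0 \<le> t \<and> t \<le> 1"
        show "h (\<lambda>p. x2s p + t * (v p - x2s p)) - lin (\<lambda>p. x2s p + t * (v p - x2s p))
          \<le> (1 - t) * (h x2s - lin x2s) + t * (h v - lin v)"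
          using h_conv[of t x2s v, OF conjunct1[OF t] conjunct2[OF t]] lin_lin[of x2s t v] by (simp add: right_diff_distrib)
      qed
      show "\<forall>z. h x2s - lin x2s + rho / 2 * (\<Sum>p\<in>P. (x2s p - x1s p)\<^sup>2) \<le> h z - lin z + rho / 2 * (\<Sum>p\<in>P. (z p - x1s p)\<^sup>2)"
      proof
        fix z
        have *: "\<And>u. (\<Sum>p\<in>P. ys p * (x1s p - u p)) = lin x1s - lin u"
          by (simp add: lin_def right_diff_distrib sum_subtractf)
        have **: "\<And>u. (\<Sum>p\<in>P. (x1s p - u p)^2) = (\<Sum>p\<in>P. (u p - x1s p)^2)"
          by (simp add: power2_commute)
        show "h x2s - lin x2s + rho / 2 * (\<Sum>p\<in>P. (x2s p - x1s p)\<^sup>2) \<le> h z - lin z + rho / 2 * (\<Sum>p\<in>P. (z p - x1s p)\<^sup>2)"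
          using sp2[of x1s z] unfolding Lr * ** by simp
      qed
    qed
    moreover have "(\<Sum>p\<in>P. (x2s p - x1s p)*(v p - x2s p)) = 0" using eqs by simp
    ultimately show "0 \<le> (h v - lin v) - (h x2s - lin x2s)" by simp
  qed
  have rho_ne: "rho \<noteq> 0" using rho_pos by simp
  have SigP: "\<And>\<phi>. (\<Sum>p\<in>P. \<phi> p) = (\<Sum>g\<in>G. \<Sum>i\<in>g. \<phi> (g,i))"
    unfolding P_def idx_def by (simp add: sum.Sigma[OF G_fin] fin_g split_beta')
  have Aineq: "\<And>k u. 0 \<le> f u - f (x1 (Suc k)) + (\<Sum>p\<in>P. (y k p + rho*(x1 (Suc k) p - x2 k p)) * (u p - x1 (Suc k) p))"
  proof -
    fix k u
    have blk: "0 \<le> lam * w g * blocknorm u g - lam * w g * blocknorm (x1 (Suc k)) g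
       + (\<Sum>i\<in>g. (y k (g,i) + rho*(x1 (Suc k) (g,i) - x2 k (g,i))) * (u (g,i) - x1 (Suc k) (g,i)))"
      if g: "g \<in> G" for g
    proof -
      have lw: "0 \<le> lam * w g" using lam_pos w_pos g by (simp add: less_imp_le)
      have "0 \<le> lam * w g * L2_set (\<lambda>i. u (g,i)) g - lam * w g * L2_set (\<lambda>i. x1 (Suc k) (g,i)) g
         + rho * (\<Sum>i\<in>g. (x1 (Suc k) (g,i) - (x2 k (g,i) - y k (g,i)/rho)) * (u (g,i) - x1 (Suc k) (g,i)))"
      proof (rule vi_lemma[where F="\<lambda>z. lam * w g * L2_set z g"])
        show "\<forall>t. 0 \<le> t \<and> t \<le> 1 \<longrightarrow> lam * w g * L2_set (\<lambda>i. x1 (Suc k) (g, i) + t * (u (g, i) - x1 (Suc k) (g, i))) g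
          \<le> (1 - t) * (lam * w g * L2_set (\<lambda>i. x1 (Suc k) (g, i)) g) + t * (lam * w g * L2_set (\<lambda>i. u (g, i)) g)"
        proof (intro allI impI)
          fix t :: real assume t: "0 \<le> t \<and> t \<le> 1"
          have "lam * w g * L2_set (\<lambda>i. x1 (Suc k) (g, i) + t * (u (g, i) - x1 (Suc k) (g, i))) g
             \<le> lam * w g * ((1-t) * L2_set (\<lambda>i. x1 (Suc k) (g, i)) g + t * L2_set (\<lambda>i. u (g, i)) g)"
            using l2_conv[of t "\<lambda>i. x1 (Suc k) (g, i)" "\<lambda>i. u (g, i)" g] t lw
            by (intro mult_left_mono) auto
          thus "lam * w g * L2_set (\<lambda>i. x1 (Suc k) (g, i) + t * (u (g, i) - x1 (Suc k) (g, i))) g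
            \<le> (1 - t) * (lam * w g * L2_set (\<lambda>i. x1 (Suc k) (g, i)) g) + t * (lam * w g * L2_set (\<lambda>i. u (g, i)) g)"
            by (simp add: algebra_simps)
        qed
        have e: "\<And>z. (\<Sum>i\<in>g. (z i - (x2 k (g,i) - y k (g,i)/rho))^2) = (\<Sum>i\<in>g. (z i - x2 k (g,i) + y k (g,i)/rho)^2)"
          by (simp add: algebra_simps)
        show "\<forall>z. lam * w g * L2_set (\<lambda>i. x1 (Suc k) (g, i)) g + rho / 2 * (\<Sum>i\<in>g. (x1 (Suc k) (g, i) - (x2 k (g, i) - y k (g, i) / rho))\<^sup>2)
          \<le> lam * w g * L2_set z g + rho / 2 * (\<Sum>i\<in>g. (z i - (x2 k (g, i) - y k (g, i) / rho))\<^sup>2)"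
          unfolding e L2_set_def using x1_upd g by blast
      qed
      moreover have "rho * (\<Sum>i\<in>g. (x1 (Suc k) (g,i) - (x2 k (g,i) - y k (g,i)/rho)) * (u (g,i) - x1 (Suc k) (g,i)))
          = (\<Sum>i\<in>g. (y k (g,i) + rho*(x1 (Suc k) (g,i) - x2 k (g,i))) * (u (g,i) - x1 (Suc k) (g,i)))"
        unfolding sum_distrib_left using rho_ne by (intro sum.cong) (simp_all add: field_simps)
      ultimately show ?thesis by (simp add: blocknorm_def L2_set_def)
    qed
    have "0 \<le> (\<Sum>g\<in>G. lam * w g * blocknorm u g - lam * w g * blocknorm (x1 (Suc k)) g
       + (\<Sum>i\<in>g. (y k (g,i) + rho*(x1 (Suc k) (g,i) - x2 k (g,i))) * (u (g,i) - x1 (Suc k) (g,i))))"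
      using blk by (simp add: sum_nonneg)
    also have "\<dots> = f u - f (x1 (Suc k)) + (\<Sum>p\<in>P. (y k p + rho*(x1 (Suc k) p - x2 k p)) * (u p - x1 (Suc k) p))"
      unfolding SigP f_def by (simp add: sum.distrib sum_subtractf sum_distrib_left mult.assoc)
    finally show "0 \<le> f u - f (x1 (Suc k)) + (\<Sum>p\<in>P. (y k p + rho*(x1 (Suc k) p - x2 k p)) * (u p - x1 (Suc k) p))" .
  qed
  have Bineq: "\<And>k v. 0 \<le> h v - h (x2 (Suc k)) + rho * (\<Sum>p\<in>P. (x2 (Suc k) p - (x1 (Suc k) p + y k p / rho)) * (v p - x2 (Suc k) p))"
  proof -
    fix k v
    show "0 \<le> h v - h (x2 (Suc k)) + rho * (\<Sum>p\<in>P. (x2 (Suc k) p - (x1 (Suc k) p + y k p / rho)) * (v p - x2 (Suc k) p))"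
    proof (rule vi_lemma[where F=h])
      show "\<forall>t. 0 \<le> t \<and> t \<le> 1 \<longrightarrow> h (\<lambda>p. x2 (Suc k) p + t * (v p - x2 (Suc k) p)) \<le> (1 - t) * h (x2 (Suc k)) + t * h v"
        using h_conv by blast
      have e: "\<And>z. lsqnorm G (\<lambda>p. z p - x1 (Suc k) p - y k p / rho) = (\<Sum>p\<in>P. (z p - (x1 (Suc k) p + y k p / rho))^2)"
        by (simp add: lsqnorm_def P_def algebra_simps)
      show "\<forall>z. h (x2 (Suc k)) + rho / 2 * (\<Sum>p\<in>P. (x2 (Suc k) p - (x1 (Suc k) p + y k p / rho))\<^sup>2)
          \<le> h z + rho / 2 * (\<Sum>p\<in>P. (z p - (x1 (Suc k) p + y k p / rho))\<^sup>2)"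
        unfolding h_def e[symmetric] using x2_upd by blast
    qed
  qed
  define V where "V = (\<lambda>k. \<Sum>p\<in>P. (y k p - ys p)^2/\<alpha> + rho*(x2 k p - x2s p)^2)"
  have step: "V (Suc k) \<le> V k" for k
  proof -
    define a1 where "a1 = x1 (Suc k)"
    define a2 where "a2 = x2 (Suc k)"
    define S1 where "S1 = (\<Sum>p\<in>P. (y k p - ys p + rho*(a1 p - x2 k p))*(a1 p - x2s p))"
    define S2 where "S2 = (\<Sum>p\<in>P. (y k p - ys p + rho*(a1 p - a2 p))*(a2 p - x2s p))"
    define SA where "SA = (\<Sum>p\<in>P. (y k p + rho*(a1 p - x2 k p)) * (x2s p - a1 p))"
    have "S1 = (\<Sum>p\<in>P. - ((y k p + rho*(a1 p - x2 k p)) * (x2s p - a1 p)) + (ys p * x2s p - ys p * a1 p))"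
      unfolding S1_def by (intro sum.cong) (simp_all add: algebra_simps)
    also have "\<dots> = - SA + (lin x2s - lin a1)"
      by (simp add: SA_def lin_def sum.distrib sum_negf sum_subtractf)
    finally have S1e: "S1 = - SA + (lin x2s - lin a1)" .
    have "0 \<le> f x2s - f a1 + SA" using Aineq[of x2s k] by (simp add: SA_def a1_def)
    moreover have "0 \<le> (f a1 + lin a1) - (f x2s + lin x2s)" by (rule Astar)
    ultimately have S1le: "S1 \<le> 0" using S1e by linarith
    define SB where "SB = (\<Sum>p\<in>P. (a2 p - (a1 p + y k p / rho)) * (x2s p - a2 p))"
    have "S2 = (\<Sum>p\<in>P. rho * ((a2 p - (a1 p + y k p / rho)) * (x2s p - a2 p)) + (ys p * x2s p - ys p * a2 p))"
      unfolding S2_def using rho_ne by (intro sum.cong) (simp_all add: field_simps)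
    also have "\<dots> = rho * SB + (lin x2s - lin a2)"
      by (simp add: SB_def lin_def sum.distrib sum_subtractf sum_distrib_left)
    finally have S2e: "S2 = rho * SB + (lin x2s - lin a2)" .
    have "0 \<le> h x2s - h a2 + rho * SB" using Bineq[of x2s k] by (simp add: SB_def a1_def a2_def)
    moreover have "0 \<le> (h a2 - lin a2) - (h x2s - lin x2s)" by (rule Bstar)
    ultimately have S2ge: "0 \<le> S2" using S2e by linarith
    define N where "N = (\<lambda>p. rho*((a1 p - a2 p) + (a2 p - x2 k p))^2 + (rho - \<alpha>)*(a1 p - a2 p)^2)"
    have Nnn: "0 \<le> sum N P" unfolding N_def using alpha by (intro sum_nonneg) simp
    have ane: "\<alpha> \<noteq> 0" using alpha by simp
    have "V (Suc k) - V k = (\<Sum>p\<in>P. 2*((y k p - ys p + rho*(a1 p - x2 k p))*(a1 p - x2s p))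
          - 2*((y k p - ys p + rho*(a1 p - a2 p))*(a2 p - x2s p)) - N p)"
      unfolding V_def sum_subtractf[symmetric]
    proof (intro sum.cong refl)
      fix p
      show "(y (Suc k) p - ys p)\<^sup>2 / \<alpha> + rho * (x2 (Suc k) p - x2s p)\<^sup>2 - ((y k p - ys p)\<^sup>2 / \<alpha> + rho * (x2 k p - x2s p)\<^sup>2) =
         2 * ((y k p - ys p + rho * (a1 p - x2 k p)) * (a1 p - x2s p)) - 2 * ((y k p - ys p + rho * (a1 p - a2 p)) * (a2 p - x2s p)) - N p"
        unfolding y_upd[rule_format, of k p] N_def a1_def a2_def using ane by (simp add: field_simps power2_eq_square)
    qed
    also have "\<dots> = 2*S1 - 2*S2 - sum N P"
      by (simp add: S1_def S2_def sum_subtractf sum_distrib_left)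
    finally show ?thesis using S1le S2ge Nnn by linarith
  qed
  have Vle: "V k \<le> V 0" for k
    by (induction k) (use step in \<open>auto intro: order_trans\<close>)
  have absq: "\<And>e::real. \<bar>e\<bar> \<le> 1 + e^2"
  proof -
    fix e :: real
    show "\<bar>e\<bar> \<le> 1 + e^2"
    proof (cases "\<bar>e\<bar> \<le> 1")
      case True moreover have "0 \<le> e^2" by simp ultimately show ?thesis by linarith
    next
      case False
      hence "\<bar>e\<bar> * 1 \<le> \<bar>e\<bar> * \<bar>e\<bar>" by (intro mult_left_mono) auto
      thus ?thesis by (simp add: power2_eq_square)
    qed
  qed
  have termle: "(y k p - ys p)^2/\<alpha> + rho*(x2 k p - x2s p)^2 \<le> V 0" if p: "p \<in> P" for k p
  proof -
    have "(y k p - ys p)^2/\<alpha> + rho*(x2 k p - x2s p)^2 \<le> V k"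
      unfolding V_def using p finP alpha rho_pos
      by (intro member_le_sum) (auto intro!: add_nonneg_nonneg)
    thus ?thesis using Vle[of k] by linarith
  qed
  define SY where "SY = (\<Sum>q\<in>P. \<bar>ys q\<bar>)"
  define SX where "SX = (\<Sum>q\<in>P. \<bar>x2s q\<bar>)"
  define A1 where "A1 = (\<Sum>q\<in>P. \<bar>x1 0 q\<bar>)"
  define Ay where "Ay = SY + 1 + \<alpha> * V 0"
  define Ax where "Ax = SX + 1 + V 0 / rho"
  have V0: "0 \<le> V 0" unfolding V_def using alpha rho_pos by (intro sum_nonneg add_nonneg_nonneg) auto
  have SYp: "\<And>p. p \<in> P \<Longrightarrow> \<bar>ys p\<bar> \<le> SY" unfolding SY_def using finP by (intro member_le_sum) auto
  have SXp: "\<And>p. p \<in> P \<Longrightarrow> \<bar>x2s p\<bar> \<le> SX" unfolding SX_def using finP by (intro member_le_sum) auto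
  have A1p: "\<And>p. p \<in> P \<Longrightarrow> \<bar>x1 0 p\<bar> \<le> A1" unfolding A1_def using finP by (intro member_le_sum) auto
  have SY0: "0 \<le> SY" unfolding SY_def by (simp add: sum_nonneg)
  have SX0: "0 \<le> SX" unfolding SX_def by (simp add: sum_nonneg)
  have A10: "0 \<le> A1" unfolding A1_def by (simp add: sum_nonneg)
  have Ay0: "0 \<le> Ay" unfolding Ay_def using SY0 V0 alpha by simp
  have Ax0: "0 \<le> Ax" unfolding Ax_def using SX0 V0 rho_pos by simp
  have yb: "\<bar>y k p\<bar> \<le> Ay" if p: "p \<in> P" for k p
  proof -
    have "0 \<le> rho * (x2 k p - x2s p)^2" using rho_pos by simp
    hence "(y k p - ys p)^2/\<alpha> \<le> V 0" using termle[OF p, of k] by linarith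
    hence "(y k p - ys p)^2 \<le> \<alpha> * V 0" using alpha by (simp add: divide_le_eq mult.commute)
    hence "\<bar>y k p - ys p\<bar> \<le> 1 + \<alpha> * V 0" using absq[of "y k p - ys p"] by linarith
    thus ?thesis using SYp[OF p] unfolding Ay_def by linarith
  qed
  have xb: "\<bar>x2 k p\<bar> \<le> Ax" if p: "p \<in> P" for k p
  proof -
    have "0 \<le> (y k p - ys p)^2/\<alpha>" using alpha by simp
    hence "rho * (x2 k p - x2s p)^2 \<le> V 0" using termle[OF p, of k] by linarith
    hence "(x2 k p - x2s p)^2 \<le> V 0 / rho" using rho_pos by (simp add: le_divide_eq mult.commute)
    hence "\<bar>x2 k p - x2s p\<bar> \<le> 1 + V 0 / rho" using absq[of "x2 k p - x2s p"] by linarith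
    thus ?thesis using SXp[OF p] unfolding Ax_def by linarith
  qed
  define C where "C = Ax + Ay + 2*Ay/\<alpha> + A1"
  have x1b: "\<bar>x1 k p\<bar> \<le> C" if p: "p \<in> P" for k p
  proof (cases k)
    case 0
    have "0 \<le> 2*Ay/\<alpha>" using Ay0 alpha by simp
    thus ?thesis using A1p[OF p] Ax0 Ay0 unfolding 0 C_def by linarith
  next
    case (Suc m)
    have e: "x1 k p = x2 k p + (y k p - y m p)/\<alpha>"
      unfolding Suc y_upd[rule_format, of m p] using alpha by (simp add: field_simps)
    have "\<bar>(y k p - y m p)/\<alpha>\<bar> = \<bar>y k p - y m p\<bar>/\<alpha>" using alpha by simp
    also have "\<dots> \<le> (2*Ay)/\<alpha>" using yb[OF p, of k] yb[OF p, of m] alpha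
      by (intro divide_right_mono) auto
    finally have "\<bar>(y k p - y m p)/\<alpha>\<bar> \<le> 2*Ay/\<alpha>" .
    hence "\<bar>x1 k p\<bar> \<le> Ax + 2*Ay/\<alpha>" using xb[OF p, of k] unfolding e by linarith
    thus ?thesis unfolding C_def using Ay0 A10 by linarith
  qed
  have "\<forall>k. \<forall>p\<in>idx G. \<bar>x1 k p\<bar> \<le> C \<and> \<bar>x2 k p\<bar> \<le> C \<and> \<bar>y k p\<bar> \<le> C"
  proof (intro allI ballI conjI)
    fix k p assume p: "p \<in> idx G"
    hence pP: "p \<in> P" by (simp add: P_def)
    have "0 \<le> 2*Ay/\<alpha>" using Ay0 alpha by simp
    show "\<bar>x1 k p\<bar> \<le> C" using x1b[OF pP] .
    show "\<bar>x2 k p\<bar> \<le> C" using xb[OF pP, of k] Ay0 A10 \<open>0 \<le> 2*Ay/\<alpha>\<close> unfolding C_def by linarith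
    show "\<bar>y k p\<bar> \<le> C" using yb[OF pP, of k] Ax0 A10 \<open>0 \<le> 2*Ay/\<alpha>\<close> unfolding C_def by linarith
  qed
  thus ?thesis by blast
qed
end
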